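(* For any prime $p\ge5$, any integer $\alpha\ge1$ and any integer $n\ge0$, \[ b_{2}\!\left(p^{2\alpha}n+\frac{(24i+p)p^{2\alpha-1}-1}{24}\right)\equiv 0 \pmod 2 \] for each $i=1,2,\ldots,p-1$.
   Context: For a positive integer $\ell$, $b_\ell(n)$ denotes the number of $\ell$-regular partitions of $n$, i.e. partitions of $n$ having no part divisible by $\ell$; equivalently $\sum_{n\ge0}b_\ell(n)q^n=\prod_{k\ge1}\frac{1-q^{\ell k}}{1-q^k}$. *)

theory Defs
  imports Main "HOL-Library.Multiset" "HOL-Computational_Algebra.Primes"
begin

definition regular_partitions :: "nat \<Rightarrow> nat \<Rightarrow> nat multiset set" where
  "regular_partitions l n =
     {M. (\<forall>x \<in># M. 0 < x \<and> \<not> l dvd x) \<and> sum_mset M = n}"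

definition b :: "nat \<Rightarrow> nat \<Rightarrow> nat" where
  "b l n = card (regular_partitions l n)"

end

theory Submission
  imports Defs "HOL-Library.Nat_Bijection"
begin

definition vv :: "nat \<Rightarrow> nat" where "vv x = multiplicity (2::nat) x"
definition od :: "nat \<Rightarrow> nat" where "od x = x div 2 ^ vv x"

lemma od_mult: "od x * 2 ^ vv x = x"
  unfolding od_def vv_def using multiplicity_dvd[of 2 x] by simp

lemma od_odd: "x > 0 \<Longrightarrow> odd (od x)"
  unfolding od_def vv_def using multiplicity_decompose[where p=2 and x=x] by simp

lemma vv_pow: assumes "odd m" shows "vv (m * 2 ^ j) = j"
proof -
  have "m \<noteq> 0" using assms by (metis odd_pos neq0_conv)
  have "multiplicity (2::nat) (m * 2^j) = multiplicity 2 m + multiplicity 2 ((2::nat)^j)"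
    by (rule prime_elem_multiplicity_mult_distrib) (use \<open>m \<noteq> 0\<close> in auto)
  moreover have "multiplicity (2::nat) m = 0" using assms not_dvd_imp_multiplicity_0 by blast
  moreover have "multiplicity (2::nat) (2^j) = j" by simp
  ultimately show ?thesis unfolding vv_def by simp
qed

lemma od_pow: assumes "odd m" shows "od (m * 2 ^ j) = m"
  unfolding od_def using vv_pow[OF assms] by simp

definition D :: "nat \<Rightarrow> nat set set" where
  "D n = {S. finite S \<and> 0 \<notin> S \<and> \<Sum>S = n}"

definition Psi :: "nat set \<Rightarrow> nat multiset" where
  "Psi S = (\<Sum>x\<in>S. replicate_mset (2 ^ vv x) (od x))"

definition Phi :: "nat multiset \<Rightarrow> nat set" where
  "Phi M = {x. 0 < x \<and> vv x \<in> set_decode (count M (od x))}"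

lemma count_Psi: "count (Psi S) m = (\<Sum>x\<in>S. if od x = m then 2 ^ vv x else 0)"
  unfolding Psi_def count_sum by (rule sum.cong) auto

lemma count_Psi_odd:
  assumes "finite S" "0 \<notin> S" "odd m"
  shows "count (Psi S) m = set_encode {j. m * 2 ^ j \<in> S}"
proof -
  have "count (Psi S) m = (\<Sum>x\<in>{x\<in>S. od x = m}. 2 ^ vv x)"
    unfolding count_Psi using assms(1) by (simp add: sum.inter_filter)
  also have "\<dots> = (\<Sum>j\<in>{j. m * 2 ^ j \<in> S}. 2 ^ j)"
  proof (rule sum.reindex_bij_witness[of _ "\<lambda>j. m * 2 ^ j" vv])
    fix x assume "x \<in> {x\<in>S. od x = m}"
    then show "m * 2 ^ vv x = x" using od_mult[of x] by auto
  qed (use assms vv_pow od_pow od_mult in auto)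
  finally show ?thesis by (simp add: set_encode_def)
qed

lemma count_Psi_even:
  assumes "0 \<notin> S" "even m"
  shows "count (Psi S) m = 0"
  unfolding count_Psi using assms od_odd by (intro sum.neutral) (metis gr0I)

lemma sum_Psi: "finite S \<Longrightarrow> sum_mset (Psi S) = \<Sum>S"
  unfolding Psi_def
proof (induction S rule: finite_induct)
  case (insert x F)
  then show ?case using od_mult[of x] by (simp add: mult.commute)
qed simp

lemma fin_dec: "finite {j. m * 2 ^ j \<in> S}" if "finite S" "odd m" for S :: "nat set"
proof -
  have "{j. m * 2 ^ j \<in> S} \<subseteq> vv ` S"
  proof
    fix j assume "j \<in> {j. m * 2 ^ j \<in> S}"
    then show "j \<in> vv ` S" using vv_pow[OF that(2), of j] by (metis image_eqI mem_Collect_eq)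
  qed
  then show ?thesis using finite_subset that by blast
qed

lemma Phi_Psi: assumes "finite S" "0 \<notin> S" shows "Phi (Psi S) = S"
proof (rule set_eqI)
  fix x
  show "x \<in> Phi (Psi S) \<longleftrightarrow> x \<in> S"
  proof (cases "x = 0")
    case True then show ?thesis using assms by (simp add: Phi_def)
  next
    case False
    then have o: "odd (od x)" using od_odd by simp
    have "x \<in> Phi (Psi S) \<longleftrightarrow> vv x \<in> set_decode (set_encode {j. od x * 2 ^ j \<in> S})"
      using False count_Psi_odd[OF assms o] by (simp add: Phi_def)
    also have "\<dots> \<longleftrightarrow> od x * 2 ^ vv x \<in> S" using fin_dec[OF assms(1) o] by simp
    finally show ?thesis using od_mult by simp
  qed
qed

lemma Phi_fin: "finite (Phi M)"
proof -
  have "Phi M \<subseteq> (\<lambda>(m,j). m * 2 ^ j) ` (SIGMA m:set_mset M. set_decode (count M m))"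
  proof
    fix x assume x: "x \<in> Phi M"
    then have "vv x \<in> set_decode (count M (od x))" by (simp add: Phi_def)
    then have "count M (od x) \<noteq> 0" by (metis empty_iff set_decode_zero)
    then have "od x \<in># M" by (simp add: not_in_iff[symmetric])
    then show "x \<in> (\<lambda>(m,j). m * 2 ^ j) ` (SIGMA m:set_mset M. set_decode (count M m))"
      using x od_mult[of x] by (force simp: Phi_def)
  qed
  then show ?thesis by (rule finite_subset) auto
qed

lemma Psi_Phi: assumes "\<forall>x\<in>#M. odd x" shows "Psi (Phi M) = M"
proof (rule multiset_eqI)
  fix m
  have z: "0 \<notin> Phi M" by (simp add: Phi_def)
  show "count (Psi (Phi M)) m = count M m"
  proof (cases "odd m")
    case True
    have "{j. m * 2 ^ j \<in> Phi M} = set_decode (count M m)"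
      using True vv_pow od_pow odd_pos by (auto simp: Phi_def)
    then show ?thesis using count_Psi_odd[OF Phi_fin z True] by simp
  next
    case False
    have "m \<notin># M" using assms False by blast
    then show ?thesis using count_Psi_even[OF z] False by (simp add: not_in_iff)
  qed
qed

lemma card_D: "card (regular_partitions 2 n) = card (D n)"
proof -
  have "bij_betw Psi (D n) (regular_partitions 2 n)"
  proof (rule bij_betw_byWitness[where f'=Phi])
    show "\<forall>a\<in>D n. Phi (Psi a) = a" using Phi_Psi by (simp add: D_def)
    show "\<forall>a'\<in>regular_partitions 2 n. Psi (Phi a') = a'"
      using Psi_Phi by (simp add: regular_partitions_def)
    show "Psi ` D n \<subseteq> regular_partitions 2 n"
    proof
      fix M assume "M \<in> Psi ` D n"
      then obtain S where S: "S \<in> D n" "M = Psi S" by auto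
      have "\<forall>x\<in>#M. 0 < x \<and> \<not> 2 dvd x"
      proof
        fix x assume "x \<in># M"
        then have "count M x \<noteq> 0" by simp
        moreover have "0 \<notin> S" using S by (simp add: D_def)
        ultimately have "odd x" using S(2) count_Psi_even[of S x] by (metis not_in_iff)
        then show "0 < x \<and> \<not> 2 dvd x" by (auto intro: gr0I)
      qed
      then show "M \<in> regular_partitions 2 n"
        using S sum_Psi by (auto simp: regular_partitions_def D_def)
    qed
    show "Phi ` regular_partitions 2 n \<subseteq> D n"
    proof
      fix S assume "S \<in> Phi ` regular_partitions 2 n"
      then obtain M where M: "M \<in> regular_partitions 2 n" "S = Phi M" by auto
      then have o: "\<forall>x\<in>#M. odd x" by (auto simp: regular_partitions_def)
      have "\<Sum>S = sum_mset M" using sum_Psi[OF Phi_fin, of M] Psi_Phi[OF o] M by simp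
      then show "S \<in> D n" using M Phi_fin by (auto simp: D_def Phi_def regular_partitions_def)
    qed
  qed
  then show ?thesis by (simp add: bij_betw_same_card)
qed

lemma even_card_involution:
  assumes "finite A" "\<forall>x\<in>A. f x \<in> A \<and> f x \<noteq> x \<and> f (f x) = x"
  shows "even (card A)"
  using assms
proof (induction "card A" arbitrary: A rule: less_induct)
  case less
  show ?case
  proof (cases "A = {}")
    case True then show ?thesis by simp
  next
    case False
    then obtain x where x: "x \<in> A" by auto
    let ?A = "A - {x, f x}"
    have fx: "f x \<in> A" "f x \<noteq> x" using less.prems x by auto
    have sub: "{x, f x} \<subseteq> A" using x fx by simp
    have c2: "card {x, f x} = 2" using fx by simp
    have c: "card ?A = card A - 2" using less.prems(1) sub c2 by (simp add: card_Diff_subset)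
    have cA: "card A \<ge> 2" using card_mono[OF less.prems(1) sub] c2 by simp
    have P: "\<forall>y\<in>?A. f y \<in> ?A \<and> f y \<noteq> y \<and> f (f y) = y"
    proof
      fix y assume y: "y \<in> ?A"
      then have yA: "y \<in> A" by simp
      have 1: "f y \<in> A" "f y \<noteq> y" "f (f y) = y" using less.prems(2) yA by auto
      have 2: "f y \<noteq> x" using y 1(3) by auto
      have 3: "f y \<noteq> f x"
      proof
        assume "f y = f x"
        then have "f (f y) = f (f x)" by simp
        then have "y = x" using 1(3) less.prems(2) x by simp
        then show False using y by simp
      qed
      show "f y \<in> ?A \<and> f y \<noteq> y \<and> f (f y) = y" using 1 2 3 by simp
    qed
    have lt: "card ?A < card A" using c cA by simp
    have "even (card ?A)" using less.hyps[OF lt _ P] less.prems(1) by simp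
    moreover have "card A = card ?A + 2" using c cA by simp
    ultimately show ?thesis by simp
  qed
qed

definition run :: "nat set \<Rightarrow> nat" where "run S = (LEAST k. Max S - k \<notin> S)"

lemma run_facts:
  assumes "finite S" "S \<noteq> {}" "0 \<notin> S"
  shows "Max S - run S \<notin> S" "\<And>k. k < run S \<Longrightarrow> Max S - k \<in> S" "1 \<le> run S" "run S \<le> Max S"
proof -
  have w: "Max S - Max S \<notin> S" using assms by simp
  show "Max S - run S \<notin> S" unfolding run_def by (rule LeastI[of _ "Max S"]) (use w in simp)
  show "\<And>k. k < run S \<Longrightarrow> Max S - k \<in> S" unfolding run_def using not_less_Least by blast
  show "run S \<le> Max S" unfolding run_def by (rule Least_le) (use w in simp)
  have "Max S - 0 \<in> S" using assms by simp
  then show "1 \<le> run S" using \<open>Max S - run S \<notin> S\<close> by (metis less_one not_le diff_zero)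
qed

lemma run_ge:
  assumes "finite S" "S \<noteq> {}" "0 \<notin> S" "\<And>k. k < r \<Longrightarrow> Max S - k \<in> S"
  shows "r \<le> run S"
  using run_facts(1)[OF assms(1-3)] assms(4) not_le by blast

lemma run_eq:
  assumes "\<And>k. k < r \<Longrightarrow> Max S - k \<in> S" "Max S - r \<notin> S"
  shows "run S = r"
  unfolding run_def
proof (rule Least_equality)
  show "Max S - r \<notin> S" by fact
  fix y assume "Max S - y \<notin> S"
  then show "r \<le> y" using assms(1) not_le by blast
qed

definition mvA :: "nat set \<Rightarrow> nat set" where
  "mvA S = (S - {Min S} - {Max S - Min S + 1..Max S}) \<union> {Max S - Min S + 2..Max S + 1}"

definition mvB :: "nat set \<Rightarrow> nat set" where
  "mvB S = (S - {Max S - run S + 1..Max S}) \<union> {Max S - run S..Max S - 1} \<union> {run S}"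

definition condA where
  "condA S \<longleftrightarrow> Min S \<le> run S \<and> \<not> (Min S = run S \<and> Min S = Max S - run S + 1)"
definition condB where
  "condB S \<longleftrightarrow> run S < Min S \<and> \<not> (Min S = run S + 1 \<and> Min S = Max S - run S + 1)"

lemma basic:
  assumes "finite S" "S \<noteq> {}" "0 \<notin> S"
  shows "1 \<le> Min S" "Min S \<le> Max S" "Min S \<le> Max S - run S + 1" "run S \<le> Max S"
    "\<And>y. y \<in> S \<Longrightarrow> Min S \<le> y \<and> y \<le> Max S" "Min S \<in> S" "Max S \<in> S"
    "\<And>y. Max S - run S + 1 \<le> y \<Longrightarrow> y \<le> Max S \<Longrightarrow> y \<in> S"
proof -
  show mi: "Min S \<in> S" and ma: "Max S \<in> S" using assms by auto
  show m: "\<And>y. y \<in> S \<Longrightarrow> Min S \<le> y \<and> y \<le> Max S" using assms by auto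
  have "Min S \<noteq> 0" using mi assms(3) by metis
  then show "1 \<le> Min S" by simp
  show "Min S \<le> Max S" using m[OF mi] by simp
  have rf1: "Max S - run S \<notin> S" and rf2: "\<And>k. k < run S \<Longrightarrow> Max S - k \<in> S"
    and rf4: "run S \<le> Max S" using run_facts[OF assms] by blast+
  show "run S \<le> Max S" by (rule rf4)
  show r: "\<And>y. Max S - run S + 1 \<le> y \<Longrightarrow> y \<le> Max S \<Longrightarrow> y \<in> S"
  proof -
    fix y assume a: "Max S - run S + 1 \<le> y" "y \<le> Max S"
    have "Max S - y < run S" using a rf4 by linarith
    then have "Max S - (Max S - y) \<in> S" by (rule rf2)
    moreover have "Max S - (Max S - y) = y" using a(2) by simp
    ultimately show "y \<in> S" by simp
  qed
  have "Max S - run S + 1 \<le> Max S" using run_facts(3)[OF assms] rf4 by linarith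
  then have "Max S - run S + 1 \<in> S" using r by simp
  then show "Min S \<le> Max S - run S + 1" using m by blast
qed

lemma lemA:
  assumes fin: "finite S" and ne: "S \<noteq> {}" and z: "0 \<notin> S" and cA: "condA S"
  defines "S' \<equiv> mvA S"
  shows "finite S'" "S' \<noteq> {}" "0 \<notin> S'" "\<Sum>S' = \<Sum>S" "\<not> condA S'" "condB S'"
    "mvB S' = S" "S' \<noteq> S"
proof -
  define s g r where "s = Min S" and "g = Max S" and "r = run S"
  note bs = basic[OF fin ne z, folded s_def g_def r_def]
  have sr: "s \<le> r" and nx: "\<not> (s = r \<and> s = g - r + 1)" using cA unfolding condA_def s_def g_def r_def by blast+
  have s1: "1 \<le> s" and sg: "s \<le> g - r + 1" and rg: "r \<le> g" using bs(1) bs(3) bs(4) by blast+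
  have inS: "\<And>y. y \<in> S \<Longrightarrow> s \<le> y \<and> y \<le> g" using bs(5) .
  have runS: "\<And>y. g - r + 1 \<le> y \<Longrightarrow> y \<le> g \<Longrightarrow> y \<in> S" using bs(8) .
  have sS: "s \<in> S" by (rule bs(6))
  have S'eq: "S' = (S - {s} - {g - s + 1..g}) \<union> {g - s + 2..g + 1}"
    by (simp add: S'_def mvA_def s_def g_def)
  have mem: "y \<in> S' \<longleftrightarrow> (y \<in> S \<and> y \<noteq> s \<and> y < g - s + 1) \<or> (g - s + 2 \<le> y \<and> y \<le> g + 1)" for y
  proof -
    have "y \<in> S \<Longrightarrow> y \<le> g" using inS by blast
    then show ?thesis unfolding S'eq by auto
  qed
  show fS': "finite S'" using fin S'eq by simp
  have sg2: "s \<le> g" using s1 sr sg rg by linarith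
  have gS': "g + 1 \<in> S'" unfolding mem using s1 sg2 by arith
  then show neS': "S' \<noteq> {}" by auto
  show z': "0 \<notin> S'" using mem[of 0] z by simp
  have le': "y \<le> g + 1" if "y \<in> S'" for y using that inS[of y] unfolding mem by auto
  have maxS': "Max S' = g + 1"
    by (rule Max_eqI) (use fS' gS' le' in auto)
  have runS': "run S' = s"
  proof (rule run_eq)
    show "Max S' - k \<in> S'" if "k < s" for k unfolding maxS' mem using that s1 sg2 by arith
    show "Max S' - s \<notin> S'" unfolding maxS' mem using s1 sg2 by arith
  qed
  have gt: "s < y" if "y \<in> S'" for y
    using that inS[of y] sr sg rg unfolding mem by auto
  have minS': "s < Min S'" using gt fS' neS' by auto
  show "\<not> condA S'" using minS' runS' by (simp add: condA_def)
  show "condB S'"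
  proof -
    have "\<not> (Min S' = s + 1 \<and> Min S' = g + 1 - s + 1)" using sr nx sg rg by arith
    then show ?thesis using minS' runS' maxS' by (simp add: condB_def)
  qed
  show "mvB S' = S"
  proof -
    have "mvB S' = (S' - {g + 1 - s + 1..g + 1}) \<union> {g + 1 - s..g + 1 - 1} \<union> {s}"
      by (simp add: mvB_def runS' maxS')
    also have "\<dots> = S"
    proof (rule set_eqI)
      fix y
      have a: "y \<in> S \<Longrightarrow> s \<le> y \<and> y \<le> g" using inS by blast
      have b: "g - r + 1 \<le> y \<Longrightarrow> y \<le> g \<Longrightarrow> y \<in> S" using runS by blast
      show "y \<in> (S' - {g + 1 - s + 1..g + 1}) \<union> {g + 1 - s..g + 1 - 1} \<union> {s} \<longleftrightarrow> y \<in> S"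
        unfolding Un_iff Diff_iff mem atLeastAtMost_iff singleton_iff
        using a b sS sr sg rg by auto
    qed
    finally show ?thesis .
  qed
  show "S' \<noteq> S" using gt sS by auto
  show "\<Sum>S' = \<Sum>S"
  proof -
    define T where "T = {g - s + 1..g}"
    have TS: "T \<subseteq> S" using runS sr sg rg unfolding T_def by auto
    have sT: "s \<notin> T" using sr nx sg rg unfolding T_def atLeastAtMost_iff by arith
    have cT: "card T = s" using sr sg rg unfolding T_def by simp
    have e2: "{g - s + 2..g + 1} = Suc ` T" unfolding T_def using sr sg rg by (simp add: image_Suc_atLeastAtMost)
    have d1: "(S - {s} - T) \<inter> Suc ` T = {}" using inS unfolding T_def by force
    have "\<Sum>S' = \<Sum>(S - {s} - T) + \<Sum>(Suc ` T)"
      unfolding S'eq T_def[symmetric] e2 by (intro sum.union_disjoint) (use fin d1 in \<open>auto simp: T_def\<close>)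
    also have "\<Sum>(Suc ` T) = \<Sum>T + s"
    proof -
      have "\<Sum>(Suc ` T) = (\<Sum>x\<in>T. x + 1)" by (subst sum.reindex) auto
      also have "\<dots> = \<Sum>T + card T" by (simp only: sum.distrib) simp
      finally show ?thesis using cT by simp
    qed
    also have "\<Sum>S = \<Sum>(S - {s} - T) + (s + \<Sum>T)"
    proof -
      have e: "S = (S - {s} - T) \<union> ({s} \<union> T)" using TS sS by auto
      have "\<Sum>S = \<Sum>(S - {s} - T) + \<Sum>({s} \<union> T)"
        by (subst e, rule sum.union_disjoint) (use fin TS finite_subset in auto)
      also have "\<Sum>({s} \<union> T) = s + \<Sum>T" using sT T_def by simp
      finally show ?thesis .
    qed
    ultimately show ?thesis by simp
  qed
qed

lemma lemB:
  assumes fin: "finite S" and ne: "S \<noteq> {}" and z: "0 \<notin> S" and cB: "condB S"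
  defines "S' \<equiv> mvB S"
  shows "finite S'" "S' \<noteq> {}" "0 \<notin> S'" "condA S'" "mvA S' = S" "S' \<noteq> S"
proof -
  define s g r where "s = Min S" and "g = Max S" and "r = run S"
  note bs = basic[OF fin ne z, folded s_def g_def r_def]
  have rs: "r < s" and nx: "\<not> (s = r + 1 \<and> s = g - r + 1)" using cB unfolding condB_def s_def g_def r_def by blast+
  have s1: "1 \<le> s" and sg: "s \<le> g - r + 1" and rg: "r \<le> g" using bs(1) bs(3) bs(4) by blast+
  have r1: "1 \<le> r" using run_facts(3)[OF fin ne z] unfolding r_def .
  have gr: "g - r \<notin> S" using run_facts(1)[OF fin ne z] unfolding r_def g_def .
  have g2: "2 * r + 1 \<le> g" using rs nx sg rg by arith
  have inS: "\<And>y. y \<in> S \<Longrightarrow> s \<le> y \<and> y \<le> g" using bs(5) .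
  have runS: "\<And>y. g - r + 1 \<le> y \<Longrightarrow> y \<le> g \<Longrightarrow> y \<in> S" using bs(8) .
  have S'eq: "S' = (S - {g - r + 1..g}) \<union> {g - r..g - 1} \<union> {r}"
    by (simp add: S'_def mvB_def r_def g_def)
  have mem: "y \<in> S' \<longleftrightarrow> (y \<in> S \<and> y < g - r + 1) \<or> (g - r \<le> y \<and> y \<le> g - 1) \<or> y = r" for y
  proof -
    have "y \<in> S \<Longrightarrow> y \<le> g" using inS by blast
    then show ?thesis unfolding S'eq by auto
  qed
  show fS': "finite S'" using fin S'eq by simp
  have rS': "r \<in> S'" unfolding mem by simp
  then show neS': "S' \<noteq> {}" by auto
  show z': "0 \<notin> S'" unfolding mem using z r1 g2 by arith
  have ge': "r \<le> y" if "y \<in> S'" for y using that inS[of y] rs g2 unfolding mem by auto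
  have minS': "Min S' = r"
    by (rule Min_eqI) (use fS' rS' ge' in auto)
  have le': "y \<le> g - 1" if "y \<in> S'" for y using that inS[of y] rs g2 r1 unfolding mem by auto
  have gS': "g - 1 \<in> S'" unfolding mem using g2 r1 by arith
  have maxS': "Max S' = g - 1"
    by (rule Max_eqI) (use fS' gS' le' in auto)
  have runS': "r \<le> run S'"
  proof (rule run_ge[OF fS' neS' z'])
    show "Max S' - k \<in> S'" if "k < r" for k unfolding maxS' mem using that g2 by arith
  qed
  show "condA S'" unfolding condA_def minS' maxS' using runS' g2 by arith
  have rnS: "r \<notin> S" using inS rs by fastforce
  show "S' \<noteq> S" using rS' rnS by auto
  show "mvA S' = S"
  proof -
    have "mvA S' = (S' - {r} - {g - 1 - r + 1..g - 1}) \<union> {g - 1 - r + 2..g - 1 + 1}"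
      by (simp add: mvA_def minS' maxS')
    also have "\<dots> = S"
    proof (rule set_eqI)
      fix y
      have a: "y \<in> S \<Longrightarrow> s \<le> y \<and> y \<le> g" using inS by blast
      have b: "g - r + 1 \<le> y \<Longrightarrow> y \<le> g \<Longrightarrow> y \<in> S" using runS by blast
      have c: "y \<in> S \<Longrightarrow> y \<noteq> g - r" using gr by blast
      show "y \<in> (S' - {r} - {g - 1 - r + 1..g - 1}) \<union> {g - 1 - r + 2..g - 1 + 1} \<longleftrightarrow> y \<in> S"
        unfolding Un_iff Diff_iff mem atLeastAtMost_iff singleton_iff
        using a b c rs g2 r1 by auto
    qed
    finally show ?thesis .
  qed
qed

lemma sum_interval: "2 * \<Sum>{a..a + k} = (k + 1) * (2 * a + k)" for a k :: nat
proof (induction k)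
  case 0 then show ?case by simp
next
  case (Suc k)
  have "{a..a + Suc k} = insert (a + Suc k) {a..a + k}" by auto
  then have "\<Sum>{a..a + Suc k} = (a + Suc k) + \<Sum>{a..a + k}" by simp
  then show ?case using Suc by (simp add: algebra_simps)
qed

lemma exceptional:
  assumes fin: "finite S" and ne: "S \<noteq> {}" and z: "0 \<notin> S" and nA: "\<not> condA S" and nB: "\<not> condB S"
  shows "\<exists>m. 24 * \<Sum>S + 1 = m ^ 2"
proof -
  define s g r where "s = Min S" and "g = Max S" and "r = run S"
  note bs = basic[OF fin ne z, folded s_def g_def r_def]
  have s1: "1 \<le> s" and sg: "s \<le> g - r + 1" and rg: "r \<le> g" using bs(1) bs(3) bs(4) by blast+
  have r1: "1 \<le> r" using run_facts(3)[OF fin ne z] unfolding r_def .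
  have inS: "\<And>y. y \<in> S \<Longrightarrow> s \<le> y \<and> y \<le> g" using bs(5) .
  have runS: "\<And>y. g - r + 1 \<le> y \<Longrightarrow> y \<le> g \<Longrightarrow> y \<in> S" using bs(8) .
  have c: "s = g - r + 1 \<and> (s = r \<or> s = r + 1)"
    using nA nB unfolding condA_def condB_def s_def g_def r_def by arith
  have Seq: "S = {s..g}"
  proof
    show "S \<subseteq> {s..g}" using inS by auto
    show "{s..g} \<subseteq> S" using runS c by auto
  qed
  obtain t where t: "r = Suc t" using r1 by (metis Suc_le_D One_nat_def)
  from c show ?thesis
  proof (elim conjE disjE)
    assume "s = g - r + 1" "s = r"
    then have "S = {t + 1..(t + 1) + t}" using Seq t rg by auto
    then have h: "2 * \<Sum>S = (t + 1) * (3 * t + 2)" using sum_interval[of "t + 1" t] by (simp add: algebra_simps)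
    have "24 * \<Sum>S + 1 = 12 * (2 * \<Sum>S) + 1" by simp
    also have "\<dots> = (6 * t + 5) ^ 2" unfolding h by (simp add: algebra_simps power2_eq_square)
    finally show ?thesis by blast
  next
    assume "s = g - r + 1" "s = r + 1"
    then have "S = {t + 2..(t + 2) + t}" using Seq t rg by auto
    then have h: "2 * \<Sum>S = (t + 1) * (3 * t + 4)" using sum_interval[of "t + 2" t] by (simp add: algebra_simps)
    have "24 * \<Sum>S + 1 = 12 * (2 * \<Sum>S) + 1" by simp
    also have "\<dots> = (6 * t + 7) ^ 2" unfolding h by (simp add: algebra_simps power2_eq_square)
    finally show ?thesis by blast
  qed
qed

definition Fr :: "nat set \<Rightarrow> nat set" where
  "Fr S = (if S = {} then S else if condA S then mvA S else if condB S then mvB S else S)"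

lemma finite_D: "finite (D n)"
proof (rule finite_subset)
  show "D n \<subseteq> Pow {0..n}"
  proof
    fix S assume "S \<in> D n"
    then have S: "finite S" "\<Sum>S = n" by (auto simp: D_def)
    have "x \<le> n" if "x \<in> S" for x using member_le_sum[of x S "\<lambda>x. x"] S that by simp
    then show "S \<in> Pow {0..n}" by auto
  qed
qed simp

lemma D_even:
  assumes "\<not> (\<exists>m. 24 * n + 1 = m ^ 2)"
  shows "even (card (D n))"
proof (rule even_card_involution[OF finite_D, of _ Fr])
  show "\<forall>S\<in>D n. Fr S \<in> D n \<and> Fr S \<noteq> S \<and> Fr (Fr S) = S"
  proof
    fix S assume SD: "S \<in> D n"
    then have fin: "finite S" and z: "0 \<notin> S" and sn: "\<Sum>S = n" by (auto simp: D_def)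
    have ne: "S \<noteq> {}"
    proof
      assume "S = {}"
      then have "n = 0" using sn by simp
      then have "24 * n + 1 = 1 ^ 2" by simp
      then show False using assms by blast
    qed
    have cAB: "condA S \<or> condB S" using exceptional[OF fin ne z] assms sn by blast
    show "Fr S \<in> D n \<and> Fr S \<noteq> S \<and> Fr (Fr S) = S"
    proof (cases "condA S")
      case True
      note L = lemA[OF fin ne z True]
      have e: "Fr S = mvA S" using ne True by (simp add: Fr_def)
      have "Fr (mvA S) = S" using L(2,5,6,7) by (simp add: Fr_def)
      then show ?thesis using e L(1,3,4,8) sn by (simp add: D_def)
    next
      case False
      then have B: "condB S" using cAB by simp
      note L = lemB[OF fin ne z B]
      note L2 = lemA[OF L(1,2,3,4)]
      have e: "Fr S = mvB S" using ne False B by (simp add: Fr_def)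
      have "Fr (mvB S) = S" using L(2,4,5) by (simp add: Fr_def)
      moreover have "\<Sum>(mvB S) = n" using L2(4) L(5) sn by simp
      ultimately show ?thesis using e L(1,3,6) by (simp add: D_def)
    qed
  qed
qed

lemma sq24: assumes "prime (p::nat)" "p \<ge> 5" shows "p ^ 2 mod 24 = 1"
proof -
  have n2: "\<not> 2 dvd p"
  proof
    assume "2 dvd p" then have "2 = (1::nat) \<or> 2 = p" using assms(1) unfolding prime_nat_iff by blast
    then show False using assms(2) by auto
  qed
  have n3: "\<not> 3 dvd p"
  proof
    assume "3 dvd p" then have "3 = (1::nat) \<or> 3 = p" using assms(1) unfolding prime_nat_iff by blast
    then show False using assms(2) by auto
  qed
  define q where "q = p mod 24"
  have q2: "q mod 2 = p mod 2" unfolding q_def by (simp add: mod_mod_cancel)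
  have q3: "q mod 3 = p mod 3" unfolding q_def by (simp add: mod_mod_cancel)
  have a: "q < 24" unfolding q_def by simp
  moreover have "q mod 2 \<noteq> 0" "q mod 3 \<noteq> 0" using q2 q3 n2 n3 by (metis dvd_eq_mod_eq_0)+
  ultimately have "q = 1 \<or> q = 5 \<or> q = 7 \<or> q = 11 \<or> q = 13 \<or> q = 17 \<or> q = 19 \<or> q = 23" by presburger
  then have "q ^ 2 mod 24 = 1" by (elim disjE) simp_all
  then show ?thesis unfolding q_def by (simp add: power_mod)
qed

lemma not_square:
  fixes p e K m :: nat
  assumes "prime p" "odd e" "\<not> p dvd K" "m ^ 2 = p ^ e * K"
  shows False
proof -
  have pe: "prime_elem p" using assms(1) by simp
  have K0: "K \<noteq> 0" using assms(3) by (metis dvd_0_right)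
  have pe0: "p ^ e \<noteq> 0" using assms(1) by (simp add: prime_gt_0_nat)
  have m0: "m \<noteq> 0"
  proof
    assume "m = 0" then have "p ^ e * K = 0" using assms(4) by simp
    then show False using K0 pe0 by simp
  qed
  have "multiplicity p (m ^ 2) = 2 * multiplicity p m"
    using prime_elem_multiplicity_power_distrib[OF pe m0] by simp
  moreover have "multiplicity p (p ^ e * K) = e"
    using prime_elem_multiplicity_mult_distrib[OF pe pe0 K0] not_dvd_imp_multiplicity_0[OF assms(3)] pe
    by simp
  ultimately show False using assms(2,4) by auto
qed

theorem theorem3p2:
  fixes p \<alpha> n i :: nat
  assumes "prime p" and "p \<ge> 5" and "\<alpha> \<ge> 1" and "1 \<le> i" and "i \<le> p - 1"
  shows "b 2 (p ^ (2 * \<alpha>) * n + ((24 * i + p) * p ^ (2 * \<alpha> - 1) - 1) div 24) mod 2 = 0"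
proof -
  define e where "e = 2 * \<alpha> - 1"
  define P where "P = p ^ e"
  define N where "N = p ^ (2 * \<alpha>) * n + ((24 * i + p) * p ^ (2 * \<alpha> - 1) - 1) div 24"
  have e2: "2 * \<alpha> = Suc e" using assms(3) unfolding e_def by simp
  have oe: "odd e" using assms(3) unfolding e_def by simp
  have pp: "p ^ (2 * \<alpha>) = p * P" unfolding P_def e2 by simp
  define X where "X = (24 * i + p) * P"
  have X: "X = 24 * (i * P) + p ^ (2 * \<alpha>)" unfolding X_def pp by (simp add: algebra_simps)
  have "p ^ (2 * \<alpha>) mod 24 = 1"
  proof -
    have "p ^ (2 * \<alpha>) = (p ^ 2) ^ \<alpha>" by (simp add: power_mult)
    then have "p ^ (2 * \<alpha>) mod 24 = ((p ^ 2) mod 24) ^ \<alpha> mod 24" by (simp add: power_mod)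
    then show ?thesis using sq24[OF assms(1,2)] by simp
  qed
  then have Xm: "X mod 24 = 1" unfolding X by simp
  have Xd: "X = 24 * (X div 24) + 1" using Xm div_mult_mod_eq[of X 24] by simp
  have N: "N = p * P * n + X div 24"
    unfolding N_def pp X_def[symmetric] e_def[symmetric] P_def[symmetric]
    using Xd by (metis diff_add_inverse2 nonzero_mult_div_cancel_left zero_neq_numeral)
  have N24: "24 * N + 1 = P * (24 * p * n + 24 * i + p)"
  proof -
    have "24 * N + 1 = 24 * p * P * n + X" using N Xd by (simp add: algebra_simps)
    then show ?thesis unfolding X_def by (simp add: algebra_simps)
  qed
  have nd: "\<not> p dvd (24 * p * n + 24 * i + p)"
  proof
    assume "p dvd (24 * p * n + 24 * i + p)"
    then have "p dvd 24 * i" by (metis dvd_add_left_iff dvd_add_right_iff dvd_mult dvd_mult2 dvd_refl mult.assoc)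
    then have "p dvd 24 \<or> p dvd i" using prime_dvd_mult_iff[OF assms(1)] by blast
    moreover have "p dvd 24 \<Longrightarrow> p dvd 2 \<or> p dvd 3"
    proof -
      assume "p dvd 24"
      then have "p dvd 2 * (2 * (2 * 3))" by simp
      then show "p dvd 2 \<or> p dvd 3" by (simp only: prime_dvd_mult_iff[OF assms(1)]) blast
    qed
    ultimately have "p dvd 2 \<or> p dvd 3 \<or> p dvd i" by blast
    moreover have "i < p" using assms(4,5) by simp
    ultimately show False using assms(2,4) by (auto dest: dvd_imp_le)
  qed
  have "\<not> (\<exists>m. 24 * N + 1 = m ^ 2)"
  proof
    assume "\<exists>m. 24 * N + 1 = m ^ 2"
    then obtain m where "m ^ 2 = p ^ e * (24 * p * n + 24 * i + p)" using N24 P_def by metis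
    then show False using not_square[OF assms(1) oe nd] by blast
  qed
  then have "even (card (D N))" by (rule D_even)
  then have "even (b 2 N)" unfolding b_def card_D .
  then show ?thesis unfolding N_def by simp
qed

end
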